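(* For $n\ge1$ and $0\le k\le n-1$, the number of directed paths in $\Gamma$ from $(0,0)$ to $(n,k)$ satisfies $$\pi(n,k,0)=E_{n,k}=\sum_{r=0}^{\lfloor (k-1)/2\rfloor}(-1)^r\binom{k}{2r+1}E_{n-2r-1},$$ where the sum is empty (equal to $0$) when $k=0$.
   Context: Let $\Gamma$ be the directed graph whose nodes are the pairs $(n,k)$ of integers with $n\ge k\ge 0$, and whose edges are, for all $n\ge k\ge 0$: $(n+1,k)\to(n+1,k+1)$ and $(n,n-k)\to(n+1,k+1)$. $\pi(n,k,i)$ denotes the number of directed paths in $\Gamma$ from $(i,0)$ to $(n,k)$. A sequence $x_1,\ldots,x_m$ is down-up if $x_1>x_2<x_3>\cdots$. $E_n$ is the number of down-up permutations of $\{1,\ldots,n\}$ ($E_0=E_1=1$). The Entringer number $E_{n,k}$ ($n\ge k\ge 0$) is the number of down-up permutations of $\{1,\ldots,n+1\}$ whose first entry is $k+1$, with the convention $E_{0,0}=1$; equivalently $E_{0,0}=1$, $E_{n,0}=0$ for $n\ge1$, and $E_{n+1,k+1}=E_{n+1,k}+E_{n,n-k}$ for $n\ge k\ge0$. *)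

theory Defs
  imports Main
begin

definition gamma_node :: "nat \<times> nat \<Rightarrow> bool" where
  "gamma_node v \<longleftrightarrow> snd v \<le> fst v"

definition gamma_edge :: "nat \<times> nat \<Rightarrow> nat \<times> nat \<Rightarrow> bool" where
  "gamma_edge u v \<longleftrightarrow>
     (\<exists>n k. k \<le> n \<and>
        ((u = (n+1, k) \<and> v = (n+1, k+1)) \<or> (u = (n, n-k) \<and> v = (n+1, k+1))))"

definition gamma_path :: "(nat \<times> nat) list \<Rightarrow> bool" where
  "gamma_path ps \<longleftrightarrow> ps \<noteq> [] \<and> (\<forall>v\<in>set ps. gamma_node v) \<and>
     (\<forall>j. Suc j < length ps \<longrightarrow> gamma_edge (ps ! j) (ps ! Suc j))"

definition path_count :: "nat \<Rightarrow> nat \<Rightarrow> nat \<Rightarrow> nat" where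
  "path_count n k i = card {ps. gamma_path ps \<and> hd ps = (i, 0) \<and> last ps = (n, k)}"

definition down_up :: "nat list \<Rightarrow> bool" where
  "down_up xs \<longleftrightarrow> (\<forall>i. Suc i < length xs \<longrightarrow>
      (if even i then xs ! i > xs ! Suc i else xs ! i < xs ! Suc i))"

definition euler_zigzag :: "nat \<Rightarrow> nat" where
  "euler_zigzag n = card {xs. distinct xs \<and> set xs = {1..n} \<and> down_up xs}"

text \<open>Entringer number E_{n,k}: down-up permutations of {1..n+1} with first entry k+1.
  (For n = 0 this gives E_{0,0} = 1, agreeing with the convention.)\<close>
definition entringer :: "nat \<Rightarrow> nat \<Rightarrow> nat" where
  "entringer n k = card {xs. distinct xs \<and> set xs = {1..n+1} \<and> down_up xs \<and> hd xs = k + 1}"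

end

theory Submission
  imports Defs
begin


definition pset :: "nat \<Rightarrow> nat \<Rightarrow> (nat \<times> nat) list set" where
  "pset a b = {ps. gamma_path ps \<and> hd ps = (0, 0) \<and> last ps = (a, b)}"

lemma edge_into: "gamma_edge u (Suc n, Suc k) \<longleftrightarrow> k \<le> n \<and> (u = (Suc n, k) \<or> u = (n, n - k))"
  unfolding gamma_edge_def by auto

lemma edge_into0: "\<not> gamma_edge u (a, 0)" "\<not> gamma_edge u (0, b)"
  unfolding gamma_edge_def by auto

lemma path_single: "gamma_path [v] \<longleftrightarrow> gamma_node v"
  unfolding gamma_path_def by auto

lemma path_snoc:
  assumes "qs \<noteq> []"
  shows "gamma_path (qs @ [v]) \<longleftrightarrow> gamma_path qs \<and> gamma_node v \<and> gamma_edge (last qs) v"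
proof -
  have A: "(\<forall>j. Suc j < length (qs @ [v]) \<longrightarrow> gamma_edge ((qs @ [v]) ! j) ((qs @ [v]) ! Suc j))
    \<longleftrightarrow> (\<forall>j. Suc j < length qs \<longrightarrow> gamma_edge (qs ! j) (qs ! Suc j)) \<and> gamma_edge (last qs) v"
  proof
    assume H: "\<forall>j. Suc j < length (qs @ [v]) \<longrightarrow> gamma_edge ((qs @ [v]) ! j) ((qs @ [v]) ! Suc j)"
    have 1: "\<forall>j. Suc j < length qs \<longrightarrow> gamma_edge (qs ! j) (qs ! Suc j)"
    proof (intro allI impI)
      fix j assume "Suc j < length qs"
      then show "gamma_edge (qs ! j) (qs ! Suc j)" using H[rule_format, of j] by (simp add: nth_append)
    qed
    have "gamma_edge (last qs) v" using H[rule_format, of "length qs - 1"] assms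
      by (simp add: nth_append last_conv_nth)
    with 1 show "(\<forall>j. Suc j < length qs \<longrightarrow> gamma_edge (qs ! j) (qs ! Suc j)) \<and> gamma_edge (last qs) v" by blast
  next
    assume H: "(\<forall>j. Suc j < length qs \<longrightarrow> gamma_edge (qs ! j) (qs ! Suc j)) \<and> gamma_edge (last qs) v"
    show "\<forall>j. Suc j < length (qs @ [v]) \<longrightarrow> gamma_edge ((qs @ [v]) ! j) ((qs @ [v]) ! Suc j)"
    proof (intro allI impI)
      fix j assume j: "Suc j < length (qs @ [v])"
      show "gamma_edge ((qs @ [v]) ! j) ((qs @ [v]) ! Suc j)"
      proof (cases "Suc j < length qs")
        case True then show ?thesis using H by (simp add: nth_append)
      next
        case False
        then have "j = length qs - 1" "Suc j = length qs" using j by auto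
        then show ?thesis using H assms by (simp add: nth_append last_conv_nth)
      qed
    qed
  qed
  show ?thesis unfolding gamma_path_def using assms A by auto
qed

lemma pset_00: "pset 0 0 = {[(0, 0)]}"
proof
  show "pset 0 0 \<subseteq> {[(0, 0)]}"
  proof
    fix ps assume ps: "ps \<in> pset 0 0"
    then have "ps \<noteq> []" by (simp add: pset_def gamma_path_def)
    then obtain qs v where qv: "ps = qs @ [v]" by (metis rev_exhaust)
    show "ps \<in> {[(0, 0)]}"
    proof (cases "qs = []")
      case True then show ?thesis using ps qv by (auto simp add: pset_def)
    next
      case False
      then have "gamma_edge (last qs) v" using ps qv path_snoc by (auto simp add: pset_def)
      moreover have "v = (0, 0)" using ps qv by (simp add: pset_def)
      ultimately show ?thesis using edge_into0 by auto
    qed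
  qed
  show "{[(0, 0)]} \<subseteq> pset 0 0" by (simp add: pset_def path_single gamma_node_def)
qed

lemma pset_S0: "pset (Suc n) 0 = {}"
proof -
  { fix ps assume ps: "ps \<in> pset (Suc n) 0"
    then have "ps \<noteq> []" by (simp add: pset_def gamma_path_def)
    then obtain qs v where qv: "ps = qs @ [v]" by (metis rev_exhaust)
    have False
    proof (cases "qs = []")
      case True then show ?thesis using ps qv by (auto simp add: pset_def)
    next
      case False
      then have "gamma_edge (last qs) v" using ps qv path_snoc by (auto simp add: pset_def)
      moreover have "v = (Suc n, 0)" using ps qv by (simp add: pset_def)
      ultimately show ?thesis using edge_into0 by auto
    qed }
  then show ?thesis by auto
qed

lemma pset_SS:
  assumes "k \<le> n"
  shows "pset (Suc n) (Suc k) = (\<lambda>qs. qs @ [(Suc n, Suc k)]) ` (pset (Suc n) k \<union> pset n (n - k))"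
proof
  show "pset (Suc n) (Suc k) \<subseteq> (\<lambda>qs. qs @ [(Suc n, Suc k)]) ` (pset (Suc n) k \<union> pset n (n - k))"
  proof
    fix ps assume ps: "ps \<in> pset (Suc n) (Suc k)"
    then have "ps \<noteq> []" by (simp add: pset_def gamma_path_def)
    then obtain qs v where qv: "ps = qs @ [v]" by (metis rev_exhaust)
    have v: "v = (Suc n, Suc k)" using ps qv by (simp add: pset_def)
    have qne: "qs \<noteq> []"
    proof
      assume "qs = []" then show False using ps qv by (auto simp add: pset_def)
    qed
    then have P: "gamma_path qs" "gamma_edge (last qs) v" using ps qv path_snoc by (auto simp: pset_def)
    have "hd qs = (0, 0)" using ps qv qne by (simp add: pset_def)
    then have "qs \<in> pset (Suc n) k \<union> pset n (n - k)"
      using P v edge_into[of "last qs" n k] by (auto simp: pset_def)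
    then show "ps \<in> (\<lambda>qs. qs @ [(Suc n, Suc k)]) ` (pset (Suc n) k \<union> pset n (n - k))"
      using qv v by blast
  qed
  show "(\<lambda>qs. qs @ [(Suc n, Suc k)]) ` (pset (Suc n) k \<union> pset n (n - k)) \<subseteq> pset (Suc n) (Suc k)"
  proof
    fix ps assume "ps \<in> (\<lambda>qs. qs @ [(Suc n, Suc k)]) ` (pset (Suc n) k \<union> pset n (n - k))"
    then obtain qs where qs: "qs \<in> pset (Suc n) k \<union> pset n (n - k)" and ps: "ps = qs @ [(Suc n, Suc k)]"
      by blast
    have qne: "qs \<noteq> []" using qs by (auto simp: pset_def gamma_path_def)
    have "gamma_edge (last qs) (Suc n, Suc k)" using qs assms edge_into[of "last qs" n k]
      by (auto simp: pset_def)
    then have "gamma_path ps" using assms qs qne ps path_snoc by (auto simp: pset_def gamma_node_def)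
    then show "ps \<in> pset (Suc n) (Suc k)" using qs qne ps by (auto simp: pset_def)
  qed
qed




definition L :: "nat \<Rightarrow> nat list set" where
  "L m = {xs. distinct xs \<and> set xs = {1..m} \<and> down_up xs}"

lemma L_length: "xs \<in> L m \<Longrightarrow> length xs = m"
  unfolding L_def using distinct_card[of xs] by auto

lemma L_finite: "finite (L m)"
proof -
  have "L m \<subseteq> {xs. set xs \<subseteq> {1..m} \<and> length xs \<le> m}" using L_length by (auto simp: L_def)
  moreover have "finite {xs. set xs \<subseteq> {1..m} \<and> length xs \<le> m}"
    by (rule finite_lists_length_le) simp
  ultimately show ?thesis by (rule finite_subset)
qed

lemma ent_L: "entringer n k = card {xs \<in> L (Suc n). hd xs = Suc k}"
  unfolding entringer_def L_def by (rule arg_cong[where f=card]) auto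

lemma ez_L: "euler_zigzag m = card (L m)"
  unfolding euler_zigzag_def L_def by simp

lemma down_up_cons_map:
  assumes dec: "\<And>x y. x \<in> set zs \<Longrightarrow> y \<in> set zs \<Longrightarrow> x < y \<Longrightarrow> h y < h x"
  shows "down_up (a # map h zs) \<longleftrightarrow> (zs \<noteq> [] \<longrightarrow> h (hd zs) < a) \<and> down_up zs"
proof -
  have key: "h (zs ! j) < h (zs ! Suc j) \<longleftrightarrow> zs ! Suc j < zs ! j"
    "h (zs ! Suc j) < h (zs ! j) \<longleftrightarrow> zs ! j < zs ! Suc j" if "Suc j < length zs" for j
  proof -
    have m: "zs ! j \<in> set zs" "zs ! Suc j \<in> set zs" using that by auto
    show "h (zs ! j) < h (zs ! Suc j) \<longleftrightarrow> zs ! Suc j < zs ! j"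
      using dec[OF m] dec[OF m(2) m(1)] by (metis less_asym linorder_neqE_nat)
    show "h (zs ! Suc j) < h (zs ! j) \<longleftrightarrow> zs ! j < zs ! Suc j"
      using dec[OF m] dec[OF m(2) m(1)] by (metis less_asym linorder_neqE_nat)
  qed
  show ?thesis
  proof
    assume H: "down_up (a # map h zs)"
    have 1: "zs \<noteq> [] \<longrightarrow> h (hd zs) < a"
    proof
      assume ne: "zs \<noteq> []"
      have "Suc 0 < length (a # map h zs) \<longrightarrow> (if even (0::nat) then (a # map h zs) ! Suc 0 < (a # map h zs) ! 0
            else (a # map h zs) ! 0 < (a # map h zs) ! Suc 0)"
        using H unfolding down_up_def by blast
      then show "h (hd zs) < a" using ne by (simp add: hd_conv_nth)
    qed
    have 2: "down_up zs" unfolding down_up_def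
    proof (intro allI impI)
      fix i assume i: "Suc i < length zs"
      have "if even (Suc i) then (a # map h zs) ! Suc (Suc i) < (a # map h zs) ! Suc i
          else (a # map h zs) ! Suc i < (a # map h zs) ! Suc (Suc i)"
        using H[unfolded down_up_def, rule_format, of "Suc i"] i by simp
      then show "if even i then zs ! Suc i < zs ! i else zs ! i < zs ! Suc i"
        using key[OF i] i by (cases "even i") simp_all
    qed
    show "(zs \<noteq> [] \<longrightarrow> h (hd zs) < a) \<and> down_up zs" using 1 2 by blast
  next
    assume H: "(zs \<noteq> [] \<longrightarrow> h (hd zs) < a) \<and> down_up zs"
    show "down_up (a # map h zs)" unfolding down_up_def
    proof (intro allI impI)
      fix i assume i: "Suc i < length (a # map h zs)"
      show "if even i then (a # map h zs) ! Suc i < (a # map h zs) ! i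
            else (a # map h zs) ! i < (a # map h zs) ! Suc i"
      proof (cases i)
        case 0 then show ?thesis using H i by (simp add: hd_conv_nth)
      next
        case (Suc j)
        then have j: "Suc j < length zs" using i by simp
        have "if even j then zs ! Suc j < zs ! j else zs ! j < zs ! Suc j"
          using conjunct2[OF H, unfolded down_up_def, rule_format, of j] j by simp
        then show ?thesis using key[OF j] j Suc by (cases "even j") simp_all
      qed
    qed
  qed
qed

lemma cons_bij:
  fixes M a :: nat and R :: "nat list \<Rightarrow> bool"
  assumes a: "1 \<le> a" "a \<le> Suc M"
  and R: "\<And>ys. R ys \<Longrightarrow> ys \<noteq> [] \<Longrightarrow> hd ys \<in> {1..Suc M} - {a} \<Longrightarrow> hd ys < a"
  shows "card {zs \<in> L M. R (map (\<lambda>y. if Suc M - y \<ge> a then Suc M - y + 1 else Suc M - y) zs)}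
       = card {xs \<in> L (Suc M). hd xs = a \<and> R (tl xs)}"
proof -
  define h where "h = (\<lambda>y. if Suc M - y \<ge> a then Suc M - y + 1 else Suc M - (y::nat))"
  define g where "g = (\<lambda>x. Suc M - (if x > a then x - 1 else (x::nat)))"
  have h_range: "h y \<in> {1..Suc M} - {a}" if "y \<in> {1..M}" for y using that a by (auto simp: h_def)
  have g_range: "g x \<in> {1..M}" if "x \<in> {1..Suc M} - {a}" for x using that a by (auto simp: g_def)
  have gh: "g (h y) = y" if "y \<in> {1..M}" for y using that a by (auto simp: h_def g_def)
  have hg: "h (g x) = x" if "x \<in> {1..Suc M} - {a}" for x using that a by (auto simp: h_def g_def)
  have hdec: "h y < h x" if "x \<in> {1..M}" "y \<in> {1..M}" "x < y" for x y
    using that a by (auto simp: h_def)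
  have hinj: "inj_on h {1..M}" by (rule inj_on_inverseI[where g=g]) (rule gh)
  have ginj: "inj_on g ({1..Suc M} - {a})" by (rule inj_on_inverseI[where g=h]) (rule hg)
  have himg: "h ` {1..M} = {1..Suc M} - {a}"
  proof
    show "h ` {1..M} \<subseteq> {1..Suc M} - {a}" using h_range by blast
    show "{1..Suc M} - {a} \<subseteq> h ` {1..M}"
    proof
      fix x assume "x \<in> {1..Suc M} - {a}"
      then show "x \<in> h ` {1..M}" using hg g_range by (metis image_eqI)
    qed
  qed
  have gimg: "g ` ({1..Suc M} - {a}) = {1..M}"
  proof
    show "g ` ({1..Suc M} - {a}) \<subseteq> {1..M}" using g_range by blast
    show "{1..M} \<subseteq> g ` ({1..Suc M} - {a})"
    proof
      fix y assume "y \<in> {1..M}"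
      then show "y \<in> g ` ({1..Suc M} - {a})" using gh h_range by (metis image_eqI)
    qed
  qed
  define Z where "Z = {zs \<in> L M. R (map h zs)}"
  define X where "X = {xs \<in> L (Suc M). hd xs = a \<and> R (tl xs)}"
  define phi where "phi = (\<lambda>zs. a # map h zs)"
  have inj: "inj_on phi Z"
  proof (rule inj_onI)
    fix zs zs' assume z: "zs \<in> Z" "zs' \<in> Z" and e: "phi zs = phi zs'"
    then have "map h zs = map h zs'" by (simp add: phi_def)
    moreover have "inj_on h (set zs \<union> set zs')" using z hinj by (auto simp: Z_def L_def)
    ultimately show "zs = zs'" using inj_on_map_eq_map by blast
  qed
  have eq: "X = phi ` Z"
  proof
    show "phi ` Z \<subseteq> X"
    proof
      fix xs assume "xs \<in> phi ` Z"
      then obtain zs where zs: "zs \<in> Z" and xs: "xs = phi zs" by blast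
      have zL: "distinct zs" "set zs = {1..M}" "down_up zs" "R (map h zs)"
        using zs by (auto simp: Z_def L_def)
      have "a \<notin> h ` {1..M}" using h_range by blast
      then have d: "distinct (a # map h zs)"
        using zL hinj by (auto simp: distinct_map)
      have s: "set (a # map h zs) = {1..Suc M}"
      proof -
        have "set (a # map h zs) = insert a (h ` {1..M})" using zL(2) by simp
        also have "\<dots> = {1..Suc M}" using himg a by auto
        finally show ?thesis .
      qed
      have hd0: "zs \<noteq> [] \<longrightarrow> h (hd zs) < a"
      proof
        assume "zs \<noteq> []"
        then have "hd zs \<in> {1..M}" using zL hd_in_set by blast
        then show "h (hd zs) < a" using R[of "map h zs"] zL h_range \<open>zs \<noteq> []\<close> by (simp add: hd_map)
      qed
      have hdec': "\<And>x y. x \<in> set zs \<Longrightarrow> y \<in> set zs \<Longrightarrow> x < y \<Longrightarrow> h y < h x"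
        using hdec zL(2) by blast
      have du: "down_up (a # map h zs)"
        using down_up_cons_map[of zs h a, OF hdec'] zL(3) hd0 by blast
      show "xs \<in> X" using d s du zL xs by (simp add: X_def L_def phi_def)
    qed
    show "X \<subseteq> phi ` Z"
    proof
      fix xs assume xs: "xs \<in> X"
      have xL: "distinct xs" "set xs = {1..Suc M}" "down_up xs" "hd xs = a" "R (tl xs)"
        using xs by (auto simp: X_def L_def)
      have "xs \<noteq> []" using xL(2) by auto
      then obtain ys where ys: "xs = a # ys" using xL(4) by (cases xs) auto
      have sys: "set ys = {1..Suc M} - {a}" using xL ys by auto
      define zs where "zs = map g ys"
      have mz: "map h zs = ys" unfolding zs_def map_map
        by (rule map_idI) (use hg sys in auto)
      have sz: "set zs = {1..M}" using gimg sys by (simp add: zs_def)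
      have dz: "distinct zs" using xL ys sys ginj by (simp add: zs_def distinct_map)
      have "down_up (a # map h zs)" using xL ys mz by simp
      moreover have hdec': "\<And>x y. x \<in> set zs \<Longrightarrow> y \<in> set zs \<Longrightarrow> x < y \<Longrightarrow> h y < h x"
        using hdec sz by blast
      ultimately have duz: "down_up zs" using down_up_cons_map[of zs h a, OF hdec'] by blast
      have "zs \<in> Z" using sz dz duz mz xL ys by (simp add: Z_def L_def)
      moreover have "xs = phi zs" using ys mz by (simp add: phi_def)
      ultimately show "xs \<in> phi ` Z" by blast
    qed
  qed
  have "card X = card Z" unfolding eq by (rule card_image[OF inj])
  then show ?thesis unfolding X_def Z_def h_def by (rule sym)
qed




lemma ent_diag: "entringer m m = euler_zigzag m"
proof -
  have "card {zs \<in> L m. (\<lambda>_. True) (map (\<lambda>y. if Suc m - y \<ge> Suc m then Suc m - y + 1 else Suc m - y) zs)}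
       = card {xs \<in> L (Suc m). hd xs = Suc m \<and> (\<lambda>_. True) (tl xs)}"
    by (rule cons_bij) auto
  then have "card (L m) = card {xs \<in> L (Suc m). hd xs = Suc m}" by simp
  then show ?thesis by (simp only: ent_L ez_L)
qed

lemma ent_00: "entringer 0 0 = 1"
proof -
  have "L 0 = {[]}" by (auto simp: L_def down_up_def)
  then show ?thesis by (simp add: ent_diag ez_L)
qed

lemma ent_S0: "entringer (Suc n) 0 = 0"
proof -
  have E: "{xs \<in> L (Suc (Suc n)). hd xs = Suc 0} = {}"
  proof (rule ccontr)
    assume "{xs \<in> L (Suc (Suc n)). hd xs = Suc 0} \<noteq> {}"
    then obtain xs where xs: "xs \<in> L (Suc (Suc n))" "hd xs = Suc 0" by blast
    have len: "length xs = Suc (Suc n)" by (rule L_length[OF xs(1)])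
    then obtain x y r where xyr: "xs = x # y # r" by (metis length_Suc_conv)
    have "y \<in> {1..Suc (Suc n)}" using xs(1) xyr by (auto simp: L_def)
    moreover have "y < x"
      using xs(1) xyr unfolding L_def down_up_def by (auto dest!: spec[of _ 0])
    ultimately show False using xs(2) xyr by auto
  qed
  show ?thesis by (simp only: ent_L E card.empty)
qed

definition sw :: "nat \<Rightarrow> nat \<Rightarrow> nat" where
  "sw b x = (if x = b then Suc b else if x = Suc b then b else x)"

lemma sw_sw[simp]: "sw b (sw b x) = x" by (simp add: sw_def)

lemma sw_inj: "inj (sw b)" by (metis injI sw_sw)

lemma sw_order: "x \<noteq> y \<Longrightarrow> \<not> (x = b \<and> y = Suc b) \<Longrightarrow> \<not> (x = Suc b \<and> y = b) \<Longrightarrow>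
   (x < y) = (sw b x < sw b y)"
  by (auto simp: sw_def)

lemma sw_L:
  assumes xs: "xs \<in> L N" and len: "2 \<le> length xs"
    and x0: "xs ! 0 = b \<or> xs ! 0 = Suc b" and x1: "xs ! 1 \<noteq> b" "xs ! 1 \<noteq> Suc b"
    and b: "1 \<le> b" "Suc b \<le> N"
  shows "map (sw b) xs \<in> L N"
proof -
  have d: "distinct xs" and s: "set xs = {1..N}" and du: "down_up xs" using xs by (auto simp: L_def)
  have d': "distinct (map (sw b) xs)" using d sw_inj by (simp add: distinct_map inj_on_def)
  have img: "sw b ` {1..N} = {1..N}"
  proof
    show "sw b ` {1..N} \<subseteq> {1..N}" using b by (auto simp: sw_def)
    show "{1..N} \<subseteq> sw b ` {1..N}"
    proof
      fix x assume x: "x \<in> {1..N}"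
      then have "sw b x \<in> {1..N}" using b by (auto simp: sw_def)
      then show "x \<in> sw b ` {1..N}" by (metis image_eqI sw_sw)
    qed
  qed
  have s': "set (map (sw b) xs) = {1..N}" using s img by simp
  have pair: "\<not> (xs ! i = b \<and> xs ! Suc i = Suc b) \<and> \<not> (xs ! i = Suc b \<and> xs ! Suc i = b)
        \<and> xs ! i \<noteq> xs ! Suc i" if i: "Suc i < length xs" for i
  proof (cases i)
    case 0
    have l0: "0 < length xs" "Suc 0 < length xs" using i 0 by auto
    have "xs ! 0 \<noteq> xs ! Suc 0" using nth_eq_iff_index_eq[OF d l0] by simp
    then show ?thesis using x1 0 by auto
  next
    case (Suc j)
    have l: "0 < length xs" "i < length xs" "Suc i < length xs" using i by auto
    have ne: "xs ! i \<noteq> xs ! 0" "xs ! Suc i \<noteq> xs ! 0" "xs ! i \<noteq> xs ! Suc i"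
      using nth_eq_iff_index_eq[OF d l(2) l(1)] nth_eq_iff_index_eq[OF d l(3) l(1)]
        nth_eq_iff_index_eq[OF d l(2) l(3)] Suc by auto
    then show ?thesis using x0 by auto
  qed
  have du': "down_up (map (sw b) xs)"
    unfolding down_up_def
  proof (intro allI impI)
    fix i assume i: "Suc i < length (map (sw b) xs)"
    then have i': "Suc i < length xs" by simp
    have o1: "(xs ! i < xs ! Suc i) = (sw b (xs ! i) < sw b (xs ! Suc i))"
      using pair[OF i'] by (intro sw_order) auto
    have o2: "(xs ! Suc i < xs ! i) = (sw b (xs ! Suc i) < sw b (xs ! i))"
      using pair[OF i'] by (intro sw_order) auto
    have "if even i then xs ! Suc i < xs ! i else xs ! i < xs ! Suc i"
      using du[unfolded down_up_def, rule_format, OF i'] .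
    then show "if even i then map (sw b) xs ! Suc i < map (sw b) xs ! i
          else map (sw b) xs ! i < map (sw b) xs ! Suc i"
      using o1 o2 i' by (cases "even i") simp_all
  qed
  show ?thesis using d' s' du' by (simp add: L_def)
qed

lemma ent_rec:
  assumes k: "k \<le> n"
  shows "entringer (Suc n) (Suc k) = entringer (Suc n) k + entringer n (n - k)"
proof -
  define N where "N = Suc (Suc n)"
  define A1 where "A1 = {xs \<in> L N. hd xs = Suc (Suc k) \<and> \<not> (tl xs \<noteq> [] \<and> hd (tl xs) = Suc k)}"
  define A2 where "A2 = {xs \<in> L N. hd xs = Suc (Suc k) \<and> (tl xs \<noteq> [] \<and> hd (tl xs) = Suc k)}"
  define B where "B = {xs \<in> L N. hd xs = Suc k}"
  have fin: "finite A1" "finite A2" using L_finite by (auto simp: A1_def A2_def)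
  have "entringer (Suc n) (Suc k) = card (A1 \<union> A2)"
    unfolding ent_L A1_def A2_def N_def by (rule arg_cong[where f=card]) auto
  also have "\<dots> = card A1 + card A2" using fin by (rule card_Un_disjoint) (auto simp: A1_def A2_def)
  finally have 1: "entringer (Suc n) (Suc k) = card A1 + card A2" .
  define h where "h = (\<lambda>y. if Suc (Suc n) - y \<ge> Suc (Suc k) then Suc (Suc n) - y + 1 else Suc (Suc n) - (y::nat))"
  have "card {zs \<in> L (Suc n). (\<lambda>ys. ys \<noteq> [] \<and> hd ys = Suc k) (map h zs)}
       = card {xs \<in> L (Suc (Suc n)). hd xs = Suc (Suc k) \<and> (\<lambda>ys. ys \<noteq> [] \<and> hd ys = Suc k) (tl xs)}"
    unfolding h_def using k by (intro cons_bij) auto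
  moreover have "{zs \<in> L (Suc n). zs \<noteq> [] \<and> hd (map h zs) = Suc k} = {zs \<in> L (Suc n). zs \<noteq> [] \<and> h (hd zs) = Suc k}"
    by (auto simp: hd_map)
  ultimately have 2: "card {zs \<in> L (Suc n). zs \<noteq> [] \<and> h (hd zs) = Suc k} = card A2"
    by (simp add: A2_def N_def)
  have "{zs \<in> L (Suc n). zs \<noteq> [] \<and> h (hd zs) = Suc k} = {zs \<in> L (Suc n). hd zs = Suc (n - k)}"
  proof (intro Collect_cong conj_cong refl)
    fix zs assume zs: "zs \<in> L (Suc n)"
    then have ne: "zs \<noteq> []" using L_length[OF zs] by auto
    then have "hd zs \<in> {1..Suc n}" using zs hd_in_set[OF ne] by (auto simp: L_def)
    then show "(zs \<noteq> [] \<and> h (hd zs) = Suc k) = (hd zs = Suc (n - k))"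
      using ne k by (auto simp: h_def)
  qed
  then have A2c: "card A2 = entringer n (n - k)" using 2 by (simp add: ent_L)
  have A1B: "map (sw (Suc k)) ` A1 = B"
  proof
    show "map (sw (Suc k)) ` A1 \<subseteq> B"
    proof
      fix ys assume "ys \<in> map (sw (Suc k)) ` A1"
      then obtain xs where xs: "xs \<in> A1" and ys: "ys = map (sw (Suc k)) xs" by blast
      have xL: "xs \<in> L N" using xs by (simp add: A1_def)
      have len: "length xs = N" by (rule L_length[OF xL])
      then obtain x y r where xyr: "xs = x # y # r" unfolding N_def by (metis length_Suc_conv)
      have dx: "distinct xs" using xL by (simp add: L_def)
      have x: "x = Suc (Suc k)" "y \<noteq> Suc k" using xs xyr by (auto simp: A1_def)
      have "y \<noteq> Suc (Suc k)" using dx xyr x by auto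
      then have "map (sw (Suc k)) xs \<in> L N"
        using sw_L[OF xL] len xyr x k by (auto simp: N_def)
      then show "ys \<in> B" using ys xyr x by (simp add: B_def sw_def)
    qed
    show "B \<subseteq> map (sw (Suc k)) ` A1"
    proof
      fix xs assume xs: "xs \<in> B"
      have xL: "xs \<in> L N" using xs by (simp add: B_def)
      have len: "length xs = N" by (rule L_length[OF xL])
      then obtain x y r where xyr: "xs = x # y # r" unfolding N_def by (metis length_Suc_conv)
      have x: "x = Suc k" using xs xyr by (simp add: B_def)
      have "y < x" using xL xyr unfolding L_def down_up_def by (auto dest!: spec[of _ 0])
      then have "map (sw (Suc k)) xs \<in> L N"
        using sw_L[OF xL] len xyr x k by (auto simp: N_def)
      then have "map (sw (Suc k)) xs \<in> A1" using xyr x \<open>y < x\<close> by (simp add: A1_def sw_def)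
      moreover have "xs = map (sw (Suc k)) (map (sw (Suc k)) xs)" by (simp add: map_idI)
      ultimately show "xs \<in> map (sw (Suc k)) ` A1" by blast
    qed
  qed
  have "card B = card A1"
    unfolding A1B[symmetric] by (rule card_image) (meson inj_mapI inj_on_subset subset_UNIV sw_inj)
  then have A1c: "card A1 = entringer (Suc n) k" by (simp add: ent_L B_def N_def)
  show ?thesis using 1 A1c A2c by simp
qed




lemma paths_ent: "b \<le> a \<Longrightarrow> finite (pset a b) \<and> card (pset a b) = entringer a b"
proof (induction a arbitrary: b)
  case 0 then show ?case by (simp add: pset_00 ent_00)
next
  case (Suc n)
  note IHo = Suc.IH
  show ?case using Suc.prems
  proof (induction b)
    case 0 then show ?case by (simp add: pset_S0 ent_S0)
  next
    case (Suc k)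
    then have k: "k \<le> n" by simp
    have IH1: "finite (pset (Suc n) k) \<and> card (pset (Suc n) k) = entringer (Suc n) k"
      using Suc.IH Suc.prems by simp
    have IH2: "finite (pset n (n - k)) \<and> card (pset n (n - k)) = entringer n (n - k)"
      using IHo[of "n - k"] by simp
    have inj: "inj_on (\<lambda>qs. qs @ [(Suc n, Suc k)]) (pset (Suc n) k \<union> pset n (n - k))"
      by (rule inj_onI) simp
    have disj: "pset (Suc n) k \<inter> pset n (n - k) = {}" by (auto simp: pset_def)
    have "card (pset (Suc n) (Suc k)) = card (pset (Suc n) k \<union> pset n (n - k))"
      unfolding pset_SS[OF k] by (rule card_image[OF inj])
    also have "\<dots> = card (pset (Suc n) k) + card (pset n (n - k))"
      using IH1 IH2 disj by (intro card_Un_disjoint) auto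
    finally show ?case using IH1 IH2 ent_rec[OF k] pset_SS[OF k] by simp
  qed
qed

definition G :: "nat \<Rightarrow> nat \<Rightarrow> int" where
  "G n k = (\<Sum>r<n. (-1) ^ r * int (k choose (2 * r + 1)) * int (euler_zigzag (n - 2 * r - 1)))"

lemma choose_d2:
  "int (Suc (Suc k) choose (2 * r + 1)) - 2 * int (Suc k choose (2 * r + 1)) + int (k choose (2 * r + 1))
   = (if r = 0 then 0 else int (k choose (2 * r - 1)))"
proof (cases r)
  case 0 then show ?thesis by simp
next
  case (Suc s)
  have e: "2 * r + 1 = Suc (Suc (Suc (2 * s)))" "2 * r - 1 = Suc (2 * s)" using Suc by auto
  show ?thesis unfolding e using Suc by (simp add: binomial_Suc_Suc)
qed

lemma G_d2:
  assumes "k \<le> m"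
  shows "G (Suc (Suc m)) (Suc (Suc k)) - 2 * G (Suc (Suc m)) (Suc k) + G (Suc (Suc m)) k = - G m k"
proof -
  define E where "E r = int (euler_zigzag (Suc (Suc m) - 2 * r - 1))" for r
  have "G (Suc (Suc m)) (Suc (Suc k)) - 2 * G (Suc (Suc m)) (Suc k) + G (Suc (Suc m)) k
     = (\<Sum>r<Suc (Suc m). (-1) ^ r * (int (Suc (Suc k) choose (2 * r + 1)) - 2 * int (Suc k choose (2 * r + 1))
          + int (k choose (2 * r + 1))) * E r)"
    unfolding G_def E_def by (simp add: sum_subtractf sum.distrib sum_distrib_left algebra_simps)
  also have "\<dots> = (\<Sum>r<Suc (Suc m). (-1) ^ r * (if r = 0 then 0 else int (k choose (2 * r - 1))) * E r)"
    by (simp only: choose_d2)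
  also have "\<dots> = (\<Sum>s<Suc m. (-1) ^ Suc s * int (k choose (2 * s + 1)) * E (Suc s))"
    by (subst sum.lessThan_Suc_shift) simp
  also have "\<dots> = (\<Sum>s<m. (-1) ^ Suc s * int (k choose (2 * s + 1)) * E (Suc s))"
    using assms by simp
  also have "\<dots> = - G m k"
    unfolding G_def E_def by (simp add: sum_negf[symmetric])
  finally show ?thesis .
qed

lemma ent_G: "1 \<le> n \<Longrightarrow> k \<le> n - 1 \<Longrightarrow> int (entringer n k) = G n k"
proof (induction n arbitrary: k rule: less_induct)
  case (less n)
  note IHn = less.IH
  show ?case using less.prems
  proof (induction k rule: less_induct)
    case (less k)
    show ?case
    proof (cases k)
      case 0
      then obtain n' where "n = Suc n'" using less.prems by (cases n) auto
      then show ?thesis using 0 by (simp add: ent_S0 G_def)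
    next
      case (Suc j)
      show ?thesis
      proof (cases j)
        case 0
        then obtain n' where n': "n = Suc n'" using less.prems Suc by (cases n) auto
        have "entringer n 1 = euler_zigzag n'"
          using ent_rec[of 0 n'] n' by (simp add: ent_S0 ent_diag)
        moreover have "G n 1 = int (euler_zigzag n')"
          unfolding G_def n' by (subst sum.lessThan_Suc_shift) simp
        ultimately show ?thesis using Suc 0 by simp
      next
        case (Suc i)
        define m where "m = n - 2"
        have m: "n = Suc (Suc m)" and im: "i \<le> m"
          using less.prems \<open>k = Suc j\<close> Suc unfolding m_def by auto
        have r1: "int (entringer n (Suc i)) = G n (Suc i)"
          using less.IH[of "Suc i"] less.prems \<open>k = Suc j\<close> Suc by simp
        have r0: "int (entringer n i) = G n i"
          using less.IH[of i] less.prems \<open>k = Suc j\<close> Suc by simp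
        have rm: "int (entringer m i) = G m i"
        proof (cases m)
          case 0 then show ?thesis using m less.prems \<open>k = Suc j\<close> \<open>j = Suc i\<close> by simp
        next
          case (Suc m')
          then show ?thesis using IHn[of m i] m less.prems \<open>k = Suc j\<close> \<open>j = Suc i\<close> by simp
        qed
        have e1: "entringer (Suc (Suc m)) (Suc (Suc i)) = entringer (Suc (Suc m)) (Suc i) + entringer (Suc m) (m - i)"
          using ent_rec[of "Suc i" "Suc m"] im by simp
        have e2: "entringer (Suc (Suc m)) (Suc i) = entringer (Suc (Suc m)) i + entringer (Suc m) (Suc (m - i))"
          using ent_rec[of i "Suc m"] im by (simp add: Suc_diff_le)
        have e3: "entringer (Suc m) (Suc (m - i)) = entringer (Suc m) (m - i) + entringer m i"
          using ent_rec[of "m - i" m] im by simp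
        have "int (entringer n k) = 2 * int (entringer n (Suc i)) - int (entringer n i) - int (entringer m i)"
          using e1 e2 e3 m \<open>k = Suc j\<close> Suc by simp
        also have "\<dots> = G n k"
          using r1 r0 rm G_d2[OF im] m \<open>k = Suc j\<close> Suc by simp
        finally show ?thesis .
      qed
    qed
  qed
qed

theorem proposition3:
  fixes n k :: nat
  assumes "1 \<le> n" and "k \<le> n - 1"
  shows "path_count n k 0 = entringer n k \<and>
         int (entringer n k) =
           (\<Sum>r\<in>{r::nat. 2 * r + 1 \<le> k}.
              (-1) ^ r * int (k choose (2 * r + 1)) * int (euler_zigzag (n - 2 * r - 1)))"
proof
  have "path_count n k 0 = card (pset n k)" by (simp add: path_count_def pset_def)
  then show "path_count n k 0 = entringer n k" using paths_ent[of k n] assms by simp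
  have "int (entringer n k) = G n k" using ent_G assms by blast
  also have "\<dots> = (\<Sum>r\<in>{r::nat. 2 * r + 1 \<le> k}.
              (-1) ^ r * int (k choose (2 * r + 1)) * int (euler_zigzag (n - 2 * r - 1)))"
    unfolding G_def
  proof (rule sum.mono_neutral_right)
    show "finite {..<n}" by simp
    show "{r. 2 * r + 1 \<le> k} \<subseteq> {..<n}" using assms by auto
    show "\<forall>i\<in>{..<n} - {r. 2 * r + 1 \<le> k}.
       (-1) ^ i * int (k choose (2 * i + 1)) * int (euler_zigzag (n - 2 * i - 1)) = 0" by simp
  qed
  finally show "int (entringer n k) = (\<Sum>r\<in>{r::nat. 2 * r + 1 \<le> k}.
              (-1) ^ r * int (k choose (2 * r + 1)) * int (euler_zigzag (n - 2 * r - 1)))" .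
qed


end
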